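(* Let $G(n,4,1)$ be the graph whose vertices are the $4$-element subsets of $[n]$, two of them adjacent iff they intersect in exactly one element. For a set $A$ of vertices let $d(A)=\max_{x\neq y}|\{v\in A:\{x,y\}\subset v\}|$. If $A$ is an independent set in $G(n,4,1)$ with $d(A)\le \frac{(tn)^2}{2}$ for some $t\in(0,1)$, then $$|A|\le (1+o(1))\max\left(\frac{n^2}{8},\frac{tn^2}{2}\right),$$ where $o(1)\to 0$ as $n\to\infty$ and does not depend on the particular set $A$. *)

theory Defs
  imports Complex_Main
begin

definition G_vertices :: "nat \<Rightarrow> nat set set" where
  "G_vertices n = {v. v \<subseteq> {1..n} \<and> card v = 4}"

definition G_adj :: "nat set \<Rightarrow> nat set \<Rightarrow> bool" where
  "G_adj u v \<longleftrightarrow> card (u \<inter> v) = 1"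

definition G_independent :: "nat \<Rightarrow> nat set set \<Rightarrow> bool" where
  "G_independent n A \<longleftrightarrow> A \<subseteq> G_vertices n \<and> (\<forall>u\<in>A. \<forall>v\<in>A. \<not> G_adj u v)"

definition codeg_max :: "nat \<Rightarrow> nat set set \<Rightarrow> nat" where
  "codeg_max n A = Max {card {v\<in>A. {x, y} \<subseteq> v} | x y. x \<in> {1..n} \<and> y \<in> {1..n} \<and> x \<noteq> y}"

end

theory Submission
  imports Defs
begin

lemma insert_eq_of_card:
  assumes "finite v" "T \<subseteq> v" "b \<in> v" "b \<notin> T" "card v = Suc (card T)"
  shows "v = insert b T"
proof -
  have fT: "finite T" using assms(1,2) finite_subset by blast
  have "insert b T \<subseteq> v" using assms by auto
  moreover have "card (insert b T) = card v" using assms fT by simp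
  ultimately have "insert b T = v" using card_seteq[OF assms(1)] by simp
  thus ?thesis by simp
qed

locale fam =
  fixes A :: "nat set set" and n :: nat
  assumes sub: "u \<in> A \<Longrightarrow> u \<subseteq> {1..n}"
      and c4: "u \<in> A \<Longrightarrow> card u = 4"
      and ind: "u \<in> A \<Longrightarrow> v \<in> A \<Longrightarrow> card (u \<inter> v) \<noteq> 1"
begin

lemma finA: "finite A"
proof -
  have "A \<subseteq> Pow {1..n}" using sub by auto
  thus ?thesis using finite_subset by blast
qed

lemma finu: "u \<in> A \<Longrightarrow> finite u"
  using c4[of u] by (metis card.infinite zero_neq_numeral)

lemma two:
  assumes "u \<in> A" "v \<in> A" "x \<in> u" "x \<in> v"
  shows "\<exists>y. y \<in> u \<and> y \<in> v \<and> y \<noteq> x"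
proof -
  have "u \<inter> v \<noteq> {x}"
  proof
    assume "u \<inter> v = {x}"
    hence "card (u \<inter> v) = 1" by simp
    thus False using ind[OF assms(1,2)] by simp
  qed
  moreover have "x \<in> u \<inter> v" using assms by blast
  ultimately obtain y where "y \<in> u \<inter> v" "y \<noteq> x" by blast
  thus ?thesis by blast
qed

definition cd :: "nat set \<Rightarrow> nat" where
  "cd T = card {u\<in>A. T \<subseteq> u}"

lemma cd_le: "card {u\<in>A. T \<subseteq> u} \<le> K \<Longrightarrow> cd T \<le> K" by (simp add: cd_def)

lemma lemG:
  assumes T3: "card T = 3" and fat: "4 \<le> cd T" and g: "g \<in> A" and ne: "T \<inter> g \<noteq> {}"
  shows "2 \<le> card (T \<inter> g)"
proof (rule ccontr)
  assume "\<not> 2 \<le> card (T \<inter> g)"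
  have fT: "finite T" using T3 card.infinite by fastforce
  have "card (T \<inter> g) \<noteq> 0" using ne fT by simp
  hence "card (T \<inter> g) = 1" using \<open>\<not> 2 \<le> card (T \<inter> g)\<close> by linarith
  then obtain a where a: "T \<inter> g = {a}" by (auto simp: card_1_singleton_iff)
  have "{u\<in>A. T \<subseteq> u} \<subseteq> (\<lambda>b. insert b T) ` (g - T)"
  proof
    fix v assume v: "v \<in> {u\<in>A. T \<subseteq> u}"
    then have va: "a \<in> v" "a \<in> g" using a by auto
    then obtain b where b: "b \<in> v" "b \<in> g" "b \<noteq> a" using two[of v g a] v g by auto
    have bT: "b \<notin> T" using a b by auto
    have "v = insert b T"
      using insert_eq_of_card[of v T b] v finu c4 T3 b bT by auto
    thus "v \<in> (\<lambda>b. insert b T) ` (g - T)" using b bT by auto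
  qed
  hence "cd T \<le> card ((\<lambda>b. insert b T) ` (g - T))"
    unfolding cd_def by (intro card_mono) (auto simp: finu g)
  also have "\<dots> \<le> card (g - T)" by (rule card_image_le) (simp add: finu g)
  also have "card (g - T) = 3"
  proof -
    have "card (g - T) = card g - card (g \<inter> T)" by (rule card_Diff_subset_Int) (simp add: fT)
    thus ?thesis using c4[OF g] a by (simp add: Int_commute)
  qed
  finally show False using fat by simp
qed

definition pointed :: "nat \<Rightarrow> bool" where
  "pointed x \<longleftrightarrow> (\<exists>y. y \<noteq> x \<and> (\<forall>u\<in>A. x \<in> u \<longrightarrow> y \<in> u))"

lemma notpointedE:
  assumes "\<not> pointed x" "y \<noteq> x"
  shows "\<exists>g\<in>A. x \<in> g \<and> y \<notin> g"
  using assms unfolding pointed_def by auto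

definition Ox :: "nat \<Rightarrow> nat set set" where
  "Ox x = {u\<in>A. x \<in> u \<and> (\<forall>T. T \<subseteq> u \<longrightarrow> x \<in> T \<longrightarrow> card T = 3 \<longrightarrow> cd T \<le> 4)}"

lemma Ox_bound:
  assumes np: "\<not> pointed x"
  shows "card (Ox x) \<le> 36"
proof (cases "Ox x = {}")
  case True thus ?thesis by simp
next
  case False
  then obtain u0 where u0: "u0 \<in> Ox x" by auto
  define g where "g y = (SOME g. g \<in> A \<and> x \<in> g \<and> y \<notin> g)" for y
  have gP: "g y \<in> A \<and> x \<in> g y \<and> y \<notin> g y" if "y \<noteq> x" for y
    unfolding g_def by (rule someI_ex) (use notpointedE[OF np that] in blast)
  define F where "F y s = (if cd {x,y,s} \<le> 4 then {v\<in>A. {x,y,s} \<subseteq> v} else {})" for y s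
  have Fc: "card (F y s) \<le> 4" for y s unfolding F_def cd_def by auto
  have u0A: "u0 \<in> A" "x \<in> u0" using u0 Ox_def by auto
  have sub: "Ox x \<subseteq> (\<Union>y\<in>u0-{x}. \<Union>s\<in>g y - {x}. F y s)"
  proof
    fix u assume u: "u \<in> Ox x"
    hence uA: "u \<in> A" "x \<in> u" using Ox_def by auto
    obtain y where y: "y \<in> u" "y \<in> u0" "y \<noteq> x" using two[OF uA(1) u0A(1) uA(2) u0A(2)] by auto
    obtain s where s: "s \<in> u" "s \<in> g y" "s \<noteq> x" using two[OF uA(1), of "g y" x] gP[OF y(3)] uA by auto
    have sy: "s \<noteq> y" using s gP[OF y(3)] by auto
    have "card {x,y,s} = 3" using y s sy by auto
    hence "cd {x,y,s} \<le> 4" using u y s unfolding Ox_def by auto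
    hence "u \<in> F y s" unfolding F_def using uA y s by auto
    thus "u \<in> (\<Union>y\<in>u0-{x}. \<Union>s\<in>g y - {x}. F y s)" using y s by auto
  qed
  have fu0: "finite (u0 - {x})" using finu u0A by simp
  have "card (Ox x) \<le> card (\<Union>y\<in>u0-{x}. \<Union>s\<in>g y - {x}. F y s)"
  proof (rule card_mono[OF _ sub])
    show "finite (\<Union>y\<in>u0-{x}. \<Union>s\<in>g y - {x}. F y s)"
      by (rule finite_subset[OF _ finA]) (auto simp: F_def split: if_splits)
  qed
  also have "\<dots> \<le> (\<Sum>y\<in>u0-{x}. card (\<Union>s\<in>g y - {x}. F y s))" by (rule card_UN_le[OF fu0])
  also have "\<dots> \<le> (\<Sum>y\<in>u0-{x}. 12)"
  proof (rule sum_mono)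
    fix y assume y: "y \<in> u0 - {x}"
    have fg: "finite (g y - {x})" using gP[of y] y finu by auto
    have "card (\<Union>s\<in>g y - {x}. F y s) \<le> (\<Sum>s\<in>g y - {x}. card (F y s))" by (rule card_UN_le[OF fg])
    also have "\<dots> \<le> (\<Sum>s\<in>g y - {x}. 4)" by (rule sum_mono) (rule Fc)
    also have "\<dots> = 12" using c4 gP[of y] y by (simp add: card_Diff_singleton)
    finally show "card (\<Union>s\<in>g y - {x}. F y s) \<le> 12" .
  qed
  also have "\<dots> = 36" using c4 u0A by (simp add: card_Diff_singleton)
  finally show ?thesis .
qed


definition fat :: "nat set \<Rightarrow> bool" where
  "fat T \<longleftrightarrow> card T = 3 \<and> 5 \<le> cd T"

definition FF :: "nat \<Rightarrow> nat set set" where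
  "FF w = {T. fat T \<and> (\<exists>x\<in>T. \<not> pointed x) \<and> w \<notin> T \<and> insert w T \<in> A}"

lemma card_Un_le3: "finite B \<Longrightarrow> card (insert a B) \<le> Suc (card B)"
  by (simp add: card_insert_if)

lemma FF_bound: "card (FF w) \<le> 65"
proof (cases "FF w = {}")
  case True thus ?thesis by simp
next
  case False
  then obtain T1 where T1: "T1 \<in> FF w" by auto
  then obtain x where x: "x \<in> T1" "\<not> pointed x" unfolding FF_def by auto
  have T1c: "card T1 = 3" "5 \<le> cd T1" "w \<notin> T1" "insert w T1 \<in> A" using T1 unfolding FF_def fat_def by auto
  have fT1: "finite T1" using T1c(1) card.infinite by fastforce
  define g where "g q = (SOME g. g \<in> A \<and> x \<in> g \<and> q \<notin> g)" for q
  have gP: "g q \<in> A \<and> x \<in> g q \<and> q \<notin> g q" if "q \<noteq> x" for q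
    unfolding g_def by (rule someI_ex) (use notpointedE[OF x(2) that] in blast)
  have gT: "T1 - {q} \<subseteq> g q" if q: "q \<in> T1" "q \<noteq> x" for q
  proof -
    have "T1 \<inter> g q \<noteq> {}" using gP[OF q(2)] x by auto
    hence "2 \<le> card (T1 \<inter> g q)" using lemG[OF T1c(1) _ ] T1c(2) gP[OF q(2)] by auto
    moreover have "T1 \<inter> g q \<subseteq> T1 - {q}" using gP[OF q(2)] by auto
    moreover have "card (T1 - {q}) = 2" using T1c(1) q(1) fT1 by (simp add: card_Diff_singleton)
    ultimately have "T1 \<inter> g q = T1 - {q}" using card_seteq[of "T1 - {q}" "T1 \<inter> g q"] fT1 by auto
    thus ?thesis by auto
  qed
  define G where "G = (\<Union>q\<in>T1-{x}. g q)"
  have fG: "finite G" unfolding G_def using fT1 gP finu by auto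
  have cG: "card G \<le> 8"
  proof -
    have "card G \<le> (\<Sum>q\<in>T1-{x}. card (g q))" unfolding G_def by (rule card_UN_le) (simp add: fT1)
    also have "\<dots> = (\<Sum>q\<in>T1-{x}. 4)" by (rule sum.cong) (use gP c4 in auto)
    also have "\<dots> = 8" using T1c(1) x(1) fT1 by (simp add: card_Diff_singleton)
    finally show ?thesis .
  qed
  have subFF: "FF w \<subseteq> insert T1 ((\<lambda>(P,s). insert s P) ` (Pow T1 \<times> G))"
  proof
    fix T assume T: "T \<in> FF w"
    show "T \<in> insert T1 ((\<lambda>(P,s). insert s P) ` (Pow T1 \<times> G))"
    proof (cases "T = T1")
      case True thus ?thesis by simp
    next
      case ne: False
      have Tc: "card T = 3" "5 \<le> cd T" "w \<notin> T" "insert w T \<in> A" using T unfolding FF_def fat_def by auto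
      have fT: "finite T" using Tc(1) card.infinite by fastforce
      have int_ne: "T \<inter> T1 \<noteq> {}"
      proof
        assume "T \<inter> T1 = {}"
        hence "insert w T \<inter> insert w T1 = {w}" using Tc(3) T1c(3) by auto
        hence "card (insert w T \<inter> insert w T1) = card {w}" by (rule arg_cong)
        hence "card (insert w T \<inter> insert w T1) = 1" by simp
        thus False using ind[OF Tc(4) T1c(4)] by blast
      qed
      have "T1 \<inter> insert w T = T1 \<inter> T" using T1c(3) by auto
      hence "2 \<le> card (T1 \<inter> T)" using lemG[OF T1c(1) _ Tc(4)] T1c(2) int_ne by (auto simp: Int_commute)
      hence c2: "2 \<le> card (T \<inter> T1)" by (simp add: Int_commute)
      have "card (T \<inter> T1) \<noteq> 3"
      proof
        assume "card (T \<inter> T1) = 3"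
        hence "T \<inter> T1 = T" "T \<inter> T1 = T1"
          using card_seteq[of T "T \<inter> T1"] card_seteq[of T1 "T \<inter> T1"] fT fT1 Tc(1) T1c(1) by auto
        thus False using ne by auto
      qed
      moreover have "card (T \<inter> T1) \<le> 3" using card_mono[OF fT, of "T \<inter> T1"] Tc(1) by auto
      ultimately have c2': "card (T \<inter> T1) = 2" using c2 by linarith
      have "card (T - T1) = 1"
        using card_Diff_subset_Int[of T T1] fT1 Tc(1) c2' by simp
      then obtain s where s: "T - T1 = {s}" by (auto simp: card_1_singleton_iff)
      have Teq: "T = insert s (T \<inter> T1)" using s by auto
      have "card ((T \<inter> T1) - {x}) \<ge> 1" using c2' card_Diff_singleton_if[of "T \<inter> T1" x] by (auto split: if_splits)
      then obtain q where q: "q \<in> T \<inter> T1" "q \<noteq> x" by (metis Diff_iff card.empty ex_in_conv insertCI not_one_le_zero)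
      have sg: "s \<in> g q"
      proof (rule ccontr)
        assume sn: "s \<notin> g q"
        have c1: "card ((T \<inter> T1) - {q}) = 1" using c2' q(1) by (simp add: card_Diff_singleton)
        have sub1: "T \<inter> g q \<subseteq> (T \<inter> T1) - {q}" using sn s gP[OF q(2)] by auto
        have "(T \<inter> T1) - {q} \<subseteq> T1 - {q}" by auto
        hence "(T \<inter> T1) - {q} \<subseteq> g q" using gT[of q] q by auto
        hence "(T \<inter> T1) - {q} \<subseteq> T \<inter> g q" by auto
        moreover have "(T \<inter> T1) - {q} \<noteq> {}"
        proof
          assume e: "(T \<inter> T1) - {q} = {}"
          have "card ((T \<inter> T1) - {q}) = 0" by (simp only: e card.empty)
          with c1 show False by simp
        qed
        ultimately have "T \<inter> g q \<noteq> {}" by auto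
        hence "2 \<le> card (T \<inter> g q)" using lemG[OF Tc(1) _ ] Tc(2) gP[OF q(2)] by auto
        moreover have "card (T \<inter> g q) \<le> 1" using card_mono[OF _ sub1] c1 fT by auto
        ultimately show False by simp
      qed
      have "s \<in> G" unfolding G_def using sg q by auto
      moreover have "T \<inter> T1 \<in> Pow T1" by auto
      ultimately have "(T \<inter> T1, s) \<in> Pow T1 \<times> G" by auto
      hence "insert s (T \<inter> T1) \<in> (\<lambda>(P,s). insert s P) ` (Pow T1 \<times> G)" by force
      thus ?thesis using Teq by simp
    qed
  qed
  have fin2: "finite ((\<lambda>(P,s). insert s P) ` (Pow T1 \<times> G))" using fT1 fG by auto
  have "card (FF w) \<le> card (insert T1 ((\<lambda>(P,s). insert s P) ` (Pow T1 \<times> G)))"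
    by (rule card_mono[OF _ subFF]) (use fin2 in simp)
  also have "\<dots> \<le> Suc (card ((\<lambda>(P,s). insert s P) ` (Pow T1 \<times> G)))" by (rule card_Un_le3[OF fin2])
  also have "card ((\<lambda>(P,s). insert s P) ` (Pow T1 \<times> G)) \<le> card (Pow T1 \<times> G)" by (rule card_image_le) (use fT1 fG in simp)
  also have "card (Pow T1 \<times> G) = 8 * card G" using fT1 fG T1c(1) by (simp add: card_cartesian_product card_Pow)
  finally show ?thesis using cG by linarith
qed


lemma FF_fin: "finite (FF w)"
proof -
  have "FF w \<subseteq> Pow {1..n}" unfolding FF_def using sub by blast
  thus ?thesis using finite_subset by blast
qed

lemma B_bound: "card {u\<in>A. \<exists>x\<in>u. \<not> pointed x} \<le> 101 * n"
proof -
  define UF where "UF = {u\<in>A. \<exists>T. T \<subseteq> u \<and> fat T \<and> (\<exists>x\<in>T. \<not> pointed x)}"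
  define OX where "OX = (\<Union>x\<in>{x\<in>{1..n}. \<not> pointed x}. Ox x)"
  have "UF \<subseteq> (\<Union>w\<in>{1..n}. insert w ` FF w)"
  proof
    fix u assume u: "u \<in> UF"
    then obtain T x where T: "u \<in> A" "T \<subseteq> u" "fat T" "x \<in> T" "\<not> pointed x" unfolding UF_def by auto
    have fu: "finite u" using finu T(1) by simp
    have "card (u - T) = 1" using card_Diff_subset[OF finite_subset[OF T(2) fu] T(2)] c4[OF T(1)] T(3)
      unfolding fat_def by simp
    then obtain w where w: "u - T = {w}" by (auto simp: card_1_singleton_iff)
    have ueq: "u = insert w T" using w T(2) by auto
    have "w \<in> {1..n}" using sub[OF T(1)] w by auto
    moreover have "T \<in> FF w" unfolding FF_def using T w ueq by auto
    ultimately show "u \<in> (\<Union>w\<in>{1..n}. insert w ` FF w)" using ueq by auto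
  qed
  hence "card UF \<le> card (\<Union>w\<in>{1..n}. insert w ` FF w)"
    by (rule card_mono[rotated]) (auto intro!: FF_fin)
  also have "\<dots> \<le> (\<Sum>w\<in>{1..n}. card (insert w ` FF w))" by (rule card_UN_le) simp
  also have "\<dots> \<le> (\<Sum>w\<in>{1..n}. 65)"
  proof (rule sum_mono)
    fix w show "card (insert w ` FF w) \<le> 65" using card_image_le[OF FF_fin, of "insert w" w] FF_bound[of w] by linarith
  qed
  also have "\<dots> = 65 * n" by simp
  finally have cUF: "card UF \<le> 65 * n" .
  have "card OX \<le> (\<Sum>x\<in>{x\<in>{1..n}. \<not> pointed x}. card (Ox x))" unfolding OX_def by (rule card_UN_le) simp
  also have "\<dots> \<le> (\<Sum>x\<in>{x\<in>{1..n}. \<not> pointed x}. 36)" by (rule sum_mono) (use Ox_bound in auto)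
  also have "\<dots> \<le> (\<Sum>x\<in>{1..n}. 36)" by (rule sum_mono2) auto
  also have "\<dots> = 36 * n" by simp
  finally have cOX: "card OX \<le> 36 * n" .
  have "{u\<in>A. \<exists>x\<in>u. \<not> pointed x} \<subseteq> OX \<union> UF"
  proof
    fix u assume "u \<in> {u\<in>A. \<exists>x\<in>u. \<not> pointed x}"
    then obtain x where u: "u \<in> A" "x \<in> u" "\<not> pointed x" by auto
    show "u \<in> OX \<union> UF"
    proof (cases "\<forall>T. T \<subseteq> u \<longrightarrow> x \<in> T \<longrightarrow> card T = 3 \<longrightarrow> cd T \<le> 4")
      case True
      hence "u \<in> Ox x" unfolding Ox_def using u by auto
      moreover have "x \<in> {1..n}" using sub[OF u(1)] u(2) by blast
      ultimately show ?thesis unfolding OX_def using u by auto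
    next
      case False
      then obtain T where "T \<subseteq> u" "x \<in> T" "card T = 3" "\<not> cd T \<le> 4" by auto
      hence "u \<in> UF" unfolding UF_def fat_def using u by auto
      thus ?thesis by simp
    qed
  qed
  hence "card {u\<in>A. \<exists>x\<in>u. \<not> pointed x} \<le> card (OX \<union> UF)"
    by (rule card_mono[rotated]) (auto simp: OX_def UF_def Ox_def intro: finite_subset[OF _ finA])
  also have "\<dots> \<le> card OX + card UF" by (rule card_Un_le)
  finally show ?thesis using cUF cOX by linarith
qed


definition pp :: "nat \<Rightarrow> nat" where
  "pp x = (SOME y. y \<noteq> x \<and> (\<forall>u\<in>A. x \<in> u \<longrightarrow> y \<in> u))"

lemma ppP: assumes "pointed x" shows "pp x \<noteq> x" "\<And>u. u \<in> A \<Longrightarrow> x \<in> u \<Longrightarrow> pp x \<in> u"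
proof -
  have "pp x \<noteq> x \<and> (\<forall>u\<in>A. x \<in> u \<longrightarrow> pp x \<in> u)"
    unfolding pp_def by (rule someI_ex) (use assms in \<open>simp add: pointed_def\<close>)
  thus "pp x \<noteq> x" "\<And>u. u \<in> A \<Longrightarrow> x \<in> u \<Longrightarrow> pp x \<in> u" by auto
qed

definition mutual :: "nat \<Rightarrow> bool" where
  "mutual x \<longleftrightarrow> x \<in> {1..n} \<and> pp x \<in> {1..n} \<and> pointed x \<and> pointed (pp x) \<and> pp (pp x) = x"

definition HH :: "nat set set" where
  "HH = {{x, pp x} | x. mutual x}"

definition VV :: "nat set \<Rightarrow> nat set" where
  "VV p = {c\<in>{1..n}. pointed c \<and> c \<notin> p \<and> pp c \<in> p}"

definition SS :: "nat set \<Rightarrow> nat set set" where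
  "SS p = {u\<in>A. p \<subseteq> u \<and> u - p \<subseteq> VV p}"

definition kern :: "nat set \<Rightarrow> bool" where
  "kern T \<longleftrightarrow> card T = 3 \<and> (\<forall>t\<in>T. \<forall>v\<in>A. t \<in> v \<longrightarrow> T \<subseteq> v)"

definition C1 where "C1 = {u\<in>A. \<exists>p\<in>HH. \<exists>q\<in>HH. p \<noteq> q \<and> u = p \<union> q}"
definition C3 where "C3 = {u\<in>A. \<exists>c\<in>u. \<forall>v\<in>A. c \<in> v \<longrightarrow> v = u}"
definition C4 where "C4 = {u\<in>A. \<exists>T. T \<subseteq> u \<and> kern T}"

lemma sub_eq: assumes "u \<in> A" "w \<in> A" "u \<subseteq> w" shows "w = u"
proof -
  have "u = w" using card_seteq[OF finu[OF assms(2)] assms(3)] c4 assms(1,2) by simp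
  thus ?thesis by simp
qed

lemma classify:
  assumes uA: "u \<in> A" and pt: "\<forall>x\<in>u. pointed x"
  shows "u \<in> C1 \<or> (\<exists>p\<in>HH. u \<in> SS p) \<or> u \<in> C3 \<or> u \<in> C4"
proof -
  have inu: "pp x \<in> u" "pp x \<noteq> x" if "x \<in> u" for x using ppP[of x] pt that uA by auto
  have reach: "pp x \<in> w" if "x \<in> u" "w \<in> A" "x \<in> w" for x w using ppP[of x] pt that by auto
  have un: "x \<in> {1..n}" if "x \<in> u" for x using sub[OF uA] that by blast
  have fu: "finite u" and cu: "card u = 4" using finu c4 uA by auto
  show ?thesis
  proof (cases "\<forall>v\<in>u. pp (pp v) = v")
    case True
    have "u \<noteq> {}" using cu by auto
    then obtain v where v: "v \<in> u" by auto
    have mv: "mutual v" unfolding mutual_def using v True inu un pt by auto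
    define p where "p = {v, pp v}"
    have pH: "p \<in> HH" unfolding HH_def p_def using mv by auto
    have cp: "card p = 2" unfolding p_def using inu(2)[OF v] by auto
    have pu: "p \<subseteq> u" unfolding p_def using v inu by auto
    have "card (u - p) = 2" using card_Diff_subset[of p u] pu cp cu fu finite_subset by auto
    hence "u - p \<noteq> {}" using card_gt_0_iff[of "u - p"] by linarith
    then obtain w where w: "w \<in> u" "w \<notin> p" by auto
    have mw: "mutual w" unfolding mutual_def using w True inu un pt by auto
    define q where "q = {w, pp w}"
    have qH: "q \<in> HH" unfolding HH_def q_def using mw by auto
    have pw1: "pp w \<noteq> v"
    proof
      assume "pp w = v" hence "pp (pp w) = pp v" by simp
      hence "w = pp v" using True w by simp
      thus False using w unfolding p_def by simp
    qed
    have pw2: "pp w \<noteq> pp v"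
    proof
      assume "pp w = pp v" hence "pp (pp w) = pp (pp v)" by simp
      hence "w = v" using True w v by simp
      thus False using w unfolding p_def by simp
    qed
    have "card (p \<union> q) = 4" unfolding p_def q_def using w pw1 pw2 inu(2)[OF v] inu(2)[OF w(1)]
      by (auto simp: p_def card_insert_if)
    moreover have "p \<union> q \<subseteq> u" using pu w inu unfolding q_def by auto
    ultimately have "p \<union> q = u" using card_seteq[OF fu] cu by simp
    moreover have "p \<noteq> q" using w unfolding q_def by auto
    ultimately have "u \<in> C1" unfolding C1_def using uA pH qH by auto
    thus ?thesis by simp
  next
    case False
    then obtain v where v: "v \<in> u" "pp (pp v) \<noteq> v" by auto
    obtain y where yd: "pp v = y" by simp
    obtain z where zd: "pp y = z" by simp
    have yu: "y \<in> u" "y \<noteq> v" using inu[OF v(1)] yd by auto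
    have zu: "z \<in> u" "z \<noteq> y" "z \<noteq> v" using inu[OF yu(1)] v(2) yd zd by auto
    have pzu: "pp z \<in> u" "pp z \<noteq> z" using inu[OF zu(1)] by auto
    have rv: "y \<in> x" if "x \<in> A" "v \<in> x" for x using reach[OF v(1) that] yd by simp
    have ry: "z \<in> x" if "x \<in> A" "y \<in> x" for x using reach[OF yu(1) that] zd by simp
    have rz: "pp z \<in> x" if "x \<in> A" "z \<in> x" for x using reach[OF zu(1) that] by simp
    show ?thesis
    proof (cases "pp z = v")
      case True
      have "kern {v,y,z}" unfolding kern_def
      proof (intro conjI ballI impI)
        show "card {v,y,z} = 3" using yu zu by (simp add: card_insert_if)
      next
        fix t w assume t: "t \<in> {v,y,z}" and wA: "w \<in> A" and tw: "t \<in> w"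
        have "v \<in> w \<or> y \<in> w \<or> z \<in> w" using t tw by blast
        hence "v \<in> w \<and> y \<in> w \<and> z \<in> w" using rv[OF wA] ry[OF wA] rz[OF wA] True by blast
        thus "{v,y,z} \<subseteq> w" by simp
      qed
      moreover have "{v,y,z} \<subseteq> u" using v yu zu by simp
      ultimately have "u \<in> C4" unfolding C4_def using uA by blast
      thus ?thesis by simp
    next
      case F1: False
      show ?thesis
      proof (cases "pp z = y")
        case True
        have my: "mutual y" unfolding mutual_def using True yu zu un pt zd by simp
        define p where "p = {y, z}"
        have pH: "p \<in> HH" unfolding HH_def p_def using my zd by blast
        have c3: "card {v,y,z} = 3" using yu zu by (simp add: card_insert_if)
        have "card (u - {v,y,z}) = 1"
          using card_Diff_subset[of "{v,y,z}" u] yu zu v cu c3 by simp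
        then obtain w where w: "u - {v,y,z} = {w}" by (auto simp: card_1_singleton_iff)
        have wu: "w \<in> u" "w \<noteq> v" "w \<noteq> y" "w \<noteq> z" using w by auto
        have ueq: "u = {v,y,z,w}" using w v yu zu by blast
        have pw: "pp w \<in> {v,y,z}" using inu[OF wu(1)] ueq by blast
        show ?thesis
        proof (cases "pp w = v")
          case True
          have "\<forall>x\<in>A. w \<in> x \<longrightarrow> x = u"
          proof (intro ballI impI)
            fix x assume xA: "x \<in> A" and wx: "w \<in> x"
            have "v \<in> x" using reach[OF wu(1) xA wx] True by simp
            hence "y \<in> x" using rv[OF xA] by simp
            hence "z \<in> x" using ry[OF xA] by simp
            hence "u \<subseteq> x" using ueq wx \<open>v \<in> x\<close> \<open>y \<in> x\<close> by simp
            thus "x = u" using sub_eq uA xA by simp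
          qed
          hence "u \<in> C3" unfolding C3_def using uA wu by blast
          thus ?thesis by simp
        next
          case False
          hence pwp: "pp w \<in> p" using pw unfolding p_def by blast
          have vV: "v \<in> VV p" unfolding VV_def p_def using un[OF v(1)] pt v(1) yu zu yd by simp
          have wV: "w \<in> VV p" using un[OF wu(1)] pt wu pwp unfolding VV_def p_def by simp
          have "u - p \<subseteq> {v, w}" unfolding p_def using ueq by blast
          hence "u - p \<subseteq> VV p" using vV wV by blast
          moreover have "p \<subseteq> u" unfolding p_def using yu zu by simp
          ultimately have "u \<in> SS p" unfolding SS_def using uA by blast
          thus ?thesis using pH by blast
        qed
      next
        case False
        have ueq: "u = {v,y,z,pp z}"
        proof -
          have "{v,y,z,pp z} \<subseteq> u" using v yu zu pzu by simp
          moreover have "card {v,y,z,pp z} = 4" using yu zu pzu F1 False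
            by (simp add: card_insert_if eq_commute)
          ultimately have "{v,y,z,pp z} = u" using card_seteq[OF fu] cu by simp
          thus ?thesis by simp
        qed
        have "\<forall>x\<in>A. v \<in> x \<longrightarrow> x = u"
        proof (intro ballI impI)
          fix x assume xA: "x \<in> A" and vx: "v \<in> x"
          hence "y \<in> x" using rv[OF xA] by simp
          hence "z \<in> x" using ry[OF xA] by simp
          hence "pp z \<in> x" using rz[OF xA] by simp
          hence "u \<subseteq> x" using ueq vx \<open>y \<in> x\<close> \<open>z \<in> x\<close> by simp
          thus "x = u" using sub_eq uA xA by simp
        qed
        hence "u \<in> C3" unfolding C3_def using uA v by blast
        thus ?thesis by simp
      qed
    qed
  qed
qed


lemma mutual_pair: assumes "mutual x" "c \<in> {x, pp x}" shows "mutual c" "{c, pp c} = {x, pp x}"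
proof -
  have m: "x \<in> {1..n}" "pp x \<in> {1..n}" "pointed x" "pointed (pp x)" "pp (pp x) = x"
    using assms(1) unfolding mutual_def by auto
  have "c = x \<or> c = pp x" using assms(2) by simp
  thus "mutual c"
  proof
    assume "c = x" thus ?thesis using assms(1) by simp
  next
    assume c: "c = pp x"
    show ?thesis unfolding mutual_def c using m by simp
  qed
  from \<open>c = x \<or> c = pp x\<close> show "{c, pp c} = {x, pp x}"
  proof
    assume "c = x" thus ?thesis by simp
  next
    assume c: "c = pp x"
    show ?thesis unfolding c m(5) by blast
  qed
qed

lemma HH_disj: assumes "p \<in> HH" "q \<in> HH" "c \<in> p" "c \<in> q" shows "p = q"
proof -
  obtain x where x: "mutual x" "p = {x, pp x}" using assms(1) unfolding HH_def by auto
  obtain y where y: "mutual y" "q = {y, pp y}" using assms(2) unfolding HH_def by auto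
  have cx: "c \<in> {x, pp x}" using x(2) assms(3) by simp
  have cy: "c \<in> {y, pp y}" using y(2) assms(4) by simp
  have "p = {c, pp c}" using mutual_pair(2)[OF x(1) cx] x(2) by simp
  moreover have "q = {c, pp c}" using mutual_pair(2)[OF y(1) cy] y(2) by simp
  ultimately show ?thesis by simp
qed

lemma HH_card: assumes "p \<in> HH" shows "card p = 2" "p \<subseteq> {1..n}"
proof -
  obtain x where x: "mutual x" "p = {x, pp x}" using assms unfolding HH_def by auto
  have "pp x \<noteq> x" using ppP(1) x(1) unfolding mutual_def by auto
  thus "card p = 2" using x by simp
  show "p \<subseteq> {1..n}" using x unfolding mutual_def by auto
qed

lemma HH_fin: "finite HH"
proof -
  have "HH \<subseteq> Pow {1..n}" using HH_card(2) by auto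
  thus ?thesis using finite_subset by blast
qed

lemma VV_HH: assumes "p \<in> HH" "q \<in> HH" shows "VV p \<inter> q = {}"
proof (rule ccontr)
  assume "VV p \<inter> q \<noteq> {}"
  then obtain c where c: "c \<in> VV p" "c \<in> q" by auto
  obtain y where y: "mutual y" "q = {y, pp y}" using assms(2) unfolding HH_def by auto
  have cy: "c \<in> {y, pp y}" using y(2) c(2) by simp
  have "q = {c, pp c}" using mutual_pair(2)[OF y(1) cy] y(2) by simp
  hence "pp c \<in> q" by simp
  moreover have "pp c \<in> p" "c \<notin> p" using c(1) unfolding VV_def by auto
  ultimately have "p = q" using HH_disj assms by blast
  thus False using c \<open>c \<notin> p\<close> by simp
qed

lemma VV_disj: assumes "p \<in> HH" "q \<in> HH" "p \<noteq> q" shows "VV p \<inter> VV q = {}"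
proof (rule ccontr)
  assume "VV p \<inter> VV q \<noteq> {}"
  then obtain c where "c \<in> VV p" "c \<in> VV q" by auto
  hence "pp c \<in> p" "pp c \<in> q" unfolding VV_def by auto
  thus False using HH_disj assms by blast
qed

lemma sum_bound: "2 * card HH + (\<Sum>p\<in>HH. card (VV p)) \<le> n"
proof -
  have fH: "\<And>p. p \<in> HH \<Longrightarrow> finite p" using HH_card(2) finite_subset by blast
  have c1: "card (\<Union>HH) = 2 * card HH"
  proof -
    have "card (\<Union>HH) = sum card HH"
      by (rule card_Union_disjoint) (auto simp: pairwise_def disjnt_def intro: fH dest: HH_disj)
    also have "\<dots> = (\<Sum>p\<in>HH. 2)" by (rule sum.cong) (auto simp: HH_card)
    finally show ?thesis by simp
  qed
  have fV: "\<And>p. finite (VV p)" unfolding VV_def by auto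
  have c2: "card (\<Union>p\<in>HH. VV p) = (\<Sum>p\<in>HH. card (VV p))"
    by (rule card_UN_disjoint) (auto simp: HH_fin fV dest: VV_disj)
  have dj: "(\<Union>HH) \<inter> (\<Union>p\<in>HH. VV p) = {}" using VV_HH by blast
  have "card ((\<Union>HH) \<union> (\<Union>p\<in>HH. VV p)) = card (\<Union>HH) + card (\<Union>p\<in>HH. VV p)"
    by (rule card_Un_disjoint) (auto simp: HH_fin fV fH dj)
  moreover have "(\<Union>HH) \<union> (\<Union>p\<in>HH. VV p) \<subseteq> {1..n}" using HH_card(2) unfolding VV_def by blast
  hence "card ((\<Union>HH) \<union> (\<Union>p\<in>HH. VV p)) \<le> n" using card_mono[of "{1..n}"] by fastforce
  ultimately show ?thesis using c1 c2 by simp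
qed


lemma C1_bound: "card C1 \<le> card HH choose 2"
proof -
  have "C1 \<subseteq> Union ` {P. P \<subseteq> HH \<and> card P = 2}"
  proof
    fix u assume "u \<in> C1"
    then obtain p q where pq: "p \<in> HH" "q \<in> HH" "p \<noteq> q" "u = p \<union> q" unfolding C1_def by blast
    have "u = \<Union>{p,q}" using pq by simp
    moreover have "{p,q} \<in> {P. P \<subseteq> HH \<and> card P = 2}" using pq by simp
    ultimately show "u \<in> Union ` {P. P \<subseteq> HH \<and> card P = 2}" by blast
  qed
  moreover have "finite {P. P \<subseteq> HH \<and> card P = 2}" using HH_fin by simp
  ultimately have "card C1 \<le> card (Union ` {P. P \<subseteq> HH \<and> card P = 2})"
    by (intro card_mono) auto
  also have "\<dots> \<le> card {P. P \<subseteq> HH \<and> card P = 2}" by (rule card_image_le) (simp add: HH_fin)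
  also have "\<dots> = card HH choose 2" by (rule n_subsets[OF HH_fin])
  finally show ?thesis .
qed

lemma codeg_ge: assumes "x \<in> {1..n}" "y \<in> {1..n}" "x \<noteq> y"
  shows "card {v\<in>A. {x,y} \<subseteq> v} \<le> codeg_max n A"
proof -
  let ?S = "{card {v\<in>A. {x, y} \<subseteq> v} | x y. x \<in> {1..n} \<and> y \<in> {1..n} \<and> x \<noteq> y}"
  have "?S \<subseteq> (\<lambda>(x,y). card {v\<in>A. {x, y} \<subseteq> v}) ` ({1..n} \<times> {1..n})" by auto
  hence "finite ?S" using finite_subset by blast
  moreover have "card {v\<in>A. {x,y} \<subseteq> v} \<in> ?S" using assms by blast
  ultimately show ?thesis unfolding codeg_max_def by (rule Max_ge)
qed

lemma SS_codeg: assumes "p \<in> HH" shows "card (SS p) \<le> codeg_max n A"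
proof -
  obtain x where x: "mutual x" "p = {x, pp x}" using assms unfolding HH_def by auto
  have ne: "pp x \<noteq> x" using ppP(1) x(1) unfolding mutual_def by auto
  have "card (SS p) \<le> card {v\<in>A. {x, pp x} \<subseteq> v}"
    by (rule card_mono) (auto simp: SS_def x(2) finA)
  also have "\<dots> \<le> codeg_max n A" using codeg_ge x(1) ne unfolding mutual_def by auto
  finally show ?thesis .
qed

lemma SS_choose: assumes "p \<in> HH" shows "card (SS p) \<le> card (VV p) choose 2"
proof -
  have fV: "finite (VV p)" unfolding VV_def by auto
  have cp: "card p = 2" "finite p" using HH_card[OF assms] finite_subset by auto
  have "inj_on (\<lambda>u. u - p) (SS p)"
  proof (rule inj_onI)
    fix u u' assume "u \<in> SS p" "u' \<in> SS p" "u - p = u' - p"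
    moreover have "p \<subseteq> u" "p \<subseteq> u'" using \<open>u \<in> SS p\<close> \<open>u' \<in> SS p\<close> unfolding SS_def by auto
    ultimately show "u = u'" by blast
  qed
  moreover have "(\<lambda>u. u - p) ` SS p \<subseteq> {e. e \<subseteq> VV p \<and> card e = 2}"
  proof
    fix e assume "e \<in> (\<lambda>u. u - p) ` SS p"
    then obtain u where u: "u \<in> SS p" "e = u - p" by blast
    have "u \<in> A" "p \<subseteq> u" "u - p \<subseteq> VV p" using u(1) unfolding SS_def by auto
    moreover have "card (u - p) = 2"
      using card_Diff_subset[OF cp(2) \<open>p \<subseteq> u\<close>] c4[OF \<open>u \<in> A\<close>] cp(1) by simp
    ultimately show "e \<in> {e. e \<subseteq> VV p \<and> card e = 2}" using u(2) by simp
  qed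
  moreover have "finite {e. e \<subseteq> VV p \<and> card e = 2}" using fV by simp
  ultimately have "card (SS p) \<le> card {e. e \<subseteq> VV p \<and> card e = 2}" by (rule card_inj_on_le)
  also have "\<dots> = card (VV p) choose 2" by (rule n_subsets[OF fV])
  finally show ?thesis .
qed

lemma C3_bound: "card C3 \<le> n"
proof -
  have "C3 \<subseteq> (\<lambda>c. SOME u. u \<in> A \<and> c \<in> u) ` {1..n}"
  proof
    fix u assume "u \<in> C3"
    then obtain c where c: "u \<in> A" "c \<in> u" "\<forall>v\<in>A. c \<in> v \<longrightarrow> v = u" unfolding C3_def by blast
    have "(SOME u. u \<in> A \<and> c \<in> u) \<in> A \<and> c \<in> (SOME u. u \<in> A \<and> c \<in> u)"
      by (rule someI_ex) (use c in blast)
    hence "(SOME u. u \<in> A \<and> c \<in> u) = u" using c(3) by blast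
    moreover have "c \<in> {1..n}" using sub[OF c(1)] c(2) by blast
    ultimately show "u \<in> (\<lambda>c. SOME u. u \<in> A \<and> c \<in> u) ` {1..n}" by force
  qed
  hence "card C3 \<le> card ((\<lambda>c. SOME u. u \<in> A \<and> c \<in> u) ` {1..n})" by (intro card_mono) auto
  also have "\<dots> \<le> card {1..n}" by (rule card_image_le) simp
  finally show ?thesis by simp
qed

lemma C4_bound: "card C4 \<le> n"
proof -
  have "C4 \<subseteq> (\<lambda>w. SOME u. u \<in> A \<and> w \<in> u \<and> kern (u - {w})) ` {1..n}"
  proof
    fix u assume "u \<in> C4"
    then obtain T where T: "u \<in> A" "T \<subseteq> u" "kern T" unfolding C4_def by blast
    have fu: "finite u" using finu T(1) by simp
    have "card (u - T) = 1" using card_Diff_subset[OF finite_subset[OF T(2) fu] T(2)] c4[OF T(1)] T(3)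
      unfolding kern_def by simp
    then obtain w where w: "u - T = {w}" by (auto simp: card_1_singleton_iff)
    have uT: "u - {w} = T" using w T(2) by blast
    have wu: "w \<in> u" using w by blast
    define u' where "u' = (SOME u. u \<in> A \<and> w \<in> u \<and> kern (u - {w}))"
    have u': "u' \<in> A \<and> w \<in> u' \<and> kern (u' - {w})"
      unfolding u'_def by (rule someI_ex) (use T uT wu in blast)
    obtain e where e: "e \<in> u" "e \<in> u'" "e \<noteq> w" using two[OF T(1), of u' w] u' wu by blast
    have "e \<in> T" using e uT by blast
    hence "T \<subseteq> u'" using T(3) u' e(2) unfolding kern_def by blast
    hence "u \<subseteq> u'" using uT u' by blast
    hence "u' = u" using sub_eq T(1) u' by blast
    moreover have "w \<in> {1..n}" using sub[OF T(1)] wu by blast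
    ultimately show "u \<in> (\<lambda>w. SOME u. u \<in> A \<and> w \<in> u \<and> kern (u - {w})) ` {1..n}"
      unfolding u'_def by force
  qed
  hence "card C4 \<le> card ((\<lambda>w. SOME u. u \<in> A \<and> w \<in> u \<and> kern (u - {w})) ` {1..n})" by (intro card_mono) auto
  also have "\<dots> \<le> card {1..n}" by (rule card_image_le) simp
  finally show ?thesis by simp
qed

lemma A_split: "card A \<le> card {u\<in>A. \<exists>x\<in>u. \<not> pointed x} + card C1 + (\<Sum>p\<in>HH. card (SS p)) + card C3 + card C4"
proof -
  have "A \<subseteq> {u\<in>A. \<exists>x\<in>u. \<not> pointed x} \<union> C1 \<union> (\<Union>p\<in>HH. SS p) \<union> C3 \<union> C4"
    using classify by blast
  hence "card A \<le> card ({u\<in>A. \<exists>x\<in>u. \<not> pointed x} \<union> C1 \<union> (\<Union>p\<in>HH. SS p) \<union> C3 \<union> C4)"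
    by (intro card_mono) (auto simp: C1_def C3_def C4_def SS_def HH_fin intro: finite_subset[OF _ finA])
  also have "\<dots> \<le> card ({u\<in>A. \<exists>x\<in>u. \<not> pointed x} \<union> C1 \<union> (\<Union>p\<in>HH. SS p) \<union> C3) + card C4"
    by (rule card_Un_le)
  also have "card ({u\<in>A. \<exists>x\<in>u. \<not> pointed x} \<union> C1 \<union> (\<Union>p\<in>HH. SS p) \<union> C3)
      \<le> card ({u\<in>A. \<exists>x\<in>u. \<not> pointed x} \<union> C1 \<union> (\<Union>p\<in>HH. SS p)) + card C3" by (rule card_Un_le)
  also have "card ({u\<in>A. \<exists>x\<in>u. \<not> pointed x} \<union> C1 \<union> (\<Union>p\<in>HH. SS p))
      \<le> card ({u\<in>A. \<exists>x\<in>u. \<not> pointed x} \<union> C1) + card (\<Union>p\<in>HH. SS p)" by (rule card_Un_le)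
  also have "card ({u\<in>A. \<exists>x\<in>u. \<not> pointed x} \<union> C1)
      \<le> card {u\<in>A. \<exists>x\<in>u. \<not> pointed x} + card C1" by (rule card_Un_le)
  also have "card (\<Union>p\<in>HH. SS p) \<le> (\<Sum>p\<in>HH. card (SS p))" by (rule card_UN_le[OF HH_fin])
  finally show ?thesis by linarith
qed


lemma main:
  fixes t :: real
  assumes cm: "real (codeg_max n A) \<le> (t * real n)^2 / 2" and t: "0 < t"
  shows "real (card A) \<le> max ((real n)^2 / 8) (t * (real n)^2 / 2) + 103 * real n"
proof -
  define M where "M = max (1/8) (t/2::real)"
  define h where "h = card HH"
  have M1: "1/8 \<le> M" and M2: "t/2 \<le> M" unfolding M_def by auto
  have nn: "0 \<le> real n" by simp
  have sb: "2 * h + (\<Sum>p\<in>HH. card (VV p)) \<le> n" using sum_bound unfolding h_def .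
  have ch: "2 * (m choose 2) \<le> m * (m - 1)" for m :: nat
    by (simp add: choose_two times_div_less_eq_dividend)
  have SSb: "real (card (SS p)) \<le> M * real n * real (card (VV p))" if p: "p \<in> HH" for p
  proof -
    define v where "v = card (VV p)"
    have a1: "card (SS p) \<le> codeg_max n A" using SS_codeg[OF p] .
    have a2: "card (SS p) \<le> v choose 2" using SS_choose[OF p] unfolding v_def .
    have "real (card (SS p)) \<le> real v * (t * real n) / 2"
    proof (cases "real v \<le> t * real n + 1")
      case True
      show ?thesis
      proof (cases "v = 0")
        case True thus ?thesis using a2 by (simp add: choose_two)
      next
        case False
        have "2 * real (card (SS p)) \<le> real (2 * (v choose 2))" using a2 by simp
        also have "\<dots> \<le> real (v * (v - 1))" using ch[of v] by (simp only: of_nat_le_iff)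
        also have "\<dots> = real v * (real v - 1)" using False by (simp add: of_nat_diff)
        also have "\<dots> \<le> real v * (t * real n)" using True by (intro mult_left_mono) auto
        finally show ?thesis by simp
      qed
    next
      case False
      have "real (card (SS p)) \<le> (t * real n)^2 / 2" using a1 cm by linarith
      also have "\<dots> = (t * real n) * (t * real n) / 2" by (simp add: power2_eq_square)
      also have "\<dots> \<le> real v * (t * real n) / 2"
        using False t nn by (intro divide_right_mono mult_right_mono) auto
      finally show ?thesis .
    qed
    also have "\<dots> = (t/2) * real n * real v" by simp
    also have "\<dots> \<le> M * real n * real v" using M2 nn by (intro mult_right_mono) auto
    finally show ?thesis unfolding v_def .
  qed
  have C1b: "real (card C1) \<le> M * real n * real (2 * h)"
  proof -
    have "4 * (h choose 2) \<le> h * n"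
    proof -
      have "4 * (h choose 2) \<le> 2 * (h * (h - 1))" using ch[of h] by linarith
      also have "\<dots> = h * (2 * (h - 1))" by simp
      also have "\<dots> \<le> h * n" using sb by (intro mult_left_mono) auto
      finally show ?thesis .
    qed
    hence "real (4 * (h choose 2)) \<le> real (h * n)" by (simp only: of_nat_le_iff)
    hence "real (h choose 2) \<le> (1/8) * real n * real (2 * h)" by simp
    also have "\<dots> \<le> M * real n * real (2 * h)" using M1 nn by (intro mult_right_mono) auto
    finally have "real (h choose 2) \<le> M * real n * real (2 * h)" .
    moreover have "real (card C1) \<le> real (h choose 2)" using C1_bound unfolding h_def by (simp only: of_nat_le_iff)
    ultimately show ?thesis by linarith
  qed
  have Sb: "(\<Sum>p\<in>HH. real (card (SS p))) \<le> M * real n * real (\<Sum>p\<in>HH. card (VV p))"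
  proof -
    have "(\<Sum>p\<in>HH. real (card (SS p))) \<le> (\<Sum>p\<in>HH. M * real n * real (card (VV p)))"
      by (rule sum_mono) (rule SSb)
    also have "\<dots> = M * real n * real (\<Sum>p\<in>HH. card (VV p))" by (simp add: sum_distrib_left)
    finally show ?thesis .
  qed
  have "real (card A) \<le> real (card {u\<in>A. \<exists>x\<in>u. \<not> pointed x}) + real (card C1)
        + (\<Sum>p\<in>HH. real (card (SS p))) + real (card C3) + real (card C4)"
    using A_split by (simp only: of_nat_le_iff of_nat_add of_nat_sum[symmetric])
  also have "\<dots> \<le> 101 * real n + M * real n * real (2 * h) + M * real n * real (\<Sum>p\<in>HH. card (VV p))
        + real n + real n"
  proof -
    have "real (card {u\<in>A. \<exists>x\<in>u. \<not> pointed x}) \<le> real (101 * n)" using B_bound by (simp only: of_nat_le_iff)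
    hence r1: "real (card {u\<in>A. \<exists>x\<in>u. \<not> pointed x}) \<le> 101 * real n" by simp
    have r3: "real (card C3) \<le> real n" using C3_bound by (simp only: of_nat_le_iff)
    have r4: "real (card C4) \<le> real n" using C4_bound by (simp only: of_nat_le_iff)
    show ?thesis using r1 r3 r4 C1b Sb by linarith
  qed
  finally have X: "real (card A) \<le> 101 * real n + M * real n * real (2 * h) + M * real n * real (\<Sum>p\<in>HH. card (VV p))
        + real n + real n" .
  have "M * real n * real (2 * h) + M * real n * real (\<Sum>p\<in>HH. card (VV p))
      = M * real n * real (2 * h + (\<Sum>p\<in>HH. card (VV p)))" by (simp add: algebra_simps)
  also have "\<dots> \<le> M * real n * real n"
  proof -
    have "real (2 * h + (\<Sum>p\<in>HH. card (VV p))) \<le> real n" using sb by (simp only: of_nat_le_iff)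
    moreover have "0 \<le> M * real n" using M1 nn by simp
    ultimately show ?thesis by (rule mult_left_mono)
  qed
  also have "M * real n * real n = max ((real n)^2 / 8) (t * (real n)^2 / 2)"
  proof (cases "t/2 \<le> 1/8")
    case True
    hence i: "(t/2) * (real n * real n) \<le> (1/8) * (real n * real n)" by (intro mult_right_mono) auto
    have "M = 1/8" unfolding M_def using True by simp
    moreover have "max ((real n)^2 / 8) (t * (real n)^2 / 2) = (real n)^2 / 8"
      by (rule max_absorb1) (use i in \<open>simp add: power2_eq_square\<close>)
    ultimately show ?thesis by (simp add: power2_eq_square)
  next
    case False
    hence i: "(1/8) * (real n * real n) \<le> (t/2) * (real n * real n)" by (intro mult_right_mono) auto
    have "M = t/2" unfolding M_def using False by simp
    moreover have "max ((real n)^2 / 8) (t * (real n)^2 / 2) = t * (real n)^2 / 2"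
      by (rule max_absorb2) (use i in \<open>simp add: power2_eq_square\<close>)
    ultimately show ?thesis by (simp add: power2_eq_square)
  qed
  finally show ?thesis using X by linarith
qed

end

theorem theorem6:
  fixes t :: real
  assumes "0 < t" and "t < 1"
  shows "\<forall>\<epsilon>>0. \<exists>N::nat. \<forall>n\<ge>N. \<forall>A.
           G_independent n A \<and> real (codeg_max n A) \<le> (t * real n)^2 / 2 \<longrightarrow>
           real (card A) \<le> (1 + \<epsilon>) * max ((real n)^2 / 8) (t * (real n)^2 / 2)"
proof (intro allI impI)
  fix \<epsilon> :: real assume e: "\<epsilon> > 0"
  define N where "N = nat \<lceil>824 / \<epsilon>\<rceil> + 1"
  show "\<exists>N::nat. \<forall>n\<ge>N. \<forall>A.
           G_independent n A \<and> real (codeg_max n A) \<le> (t * real n)^2 / 2 \<longrightarrow>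
           real (card A) \<le> (1 + \<epsilon>) * max ((real n)^2 / 8) (t * (real n)^2 / 2)"
  proof (intro exI[of _ N] allI impI)
    fix n A assume nN: "N \<le> n"
      and h: "G_independent n A \<and> real (codeg_max n A) \<le> (t * real n)^2 / 2"
    have gi: "A \<subseteq> G_vertices n" "\<forall>u\<in>A. \<forall>v\<in>A. \<not> G_adj u v"
      using h unfolding G_independent_def by auto
    interpret F: fam A n
    proof
      fix u assume "u \<in> A" thus "u \<subseteq> {1..n}" using gi(1) unfolding G_vertices_def by auto
    next
      fix u assume "u \<in> A" thus "card u = 4" using gi(1) unfolding G_vertices_def by auto
    next
      fix u v assume "u \<in> A" "v \<in> A" thus "card (u \<inter> v) \<noteq> 1" using gi(2) unfolding G_adj_def by auto
    qed
    have mb: "real (card A) \<le> max ((real n)^2 / 8) (t * (real n)^2 / 2) + 103 * real n"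
      using F.main[of t] h assms(1) by simp
    have "824 / \<epsilon> \<le> real N" unfolding N_def by linarith
    also have "\<dots> \<le> real n" using nN by simp
    finally have "824 / \<epsilon> \<le> real n" .
    hence en: "824 \<le> \<epsilon> * real n" using e by (simp add: field_simps)
    have "103 * real n \<le> \<epsilon> * real n * real n / 8"
    proof -
      have "824 * real n \<le> \<epsilon> * real n * real n" using en by (intro mult_right_mono) auto
      thus ?thesis by simp
    qed
    also have "\<epsilon> * real n * real n / 8 = \<epsilon> * ((real n)^2 / 8)" by (simp add: power2_eq_square)
    also have "\<dots> \<le> \<epsilon> * max ((real n)^2 / 8) (t * (real n)^2 / 2)" using e by (intro mult_left_mono) auto
    finally show "real (card A) \<le> (1 + \<epsilon>) * max ((real n)^2 / 8) (t * (real n)^2 / 2)"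
      using mb by (simp add: algebra_simps)
  qed
qed

end
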